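(* Let $k\ge1$, let $R_1,\dots,R_k\in\mathcal R$, and let $n_1,\dots,n_k\in\mathbb N$ with $n_k=\max(n_1,\dots,n_k)$. Put $A=\pi_{n_1}^{-1}(R_1)\cap\dots\cap\pi_{n_k}^{-1}(R_k)\subset\widehat P$. Then $A=\pi_{n_k}^{-1}(B)$ for some simple set $B\subset P$.
   Context: Let $I=[-1,1]$ and $J=(1,2]$. For $t\in J$ let $f_t\colon I\to I$ be the core tent map $f_t(x)=\min\big(t(x-1)+3,\ t(1-x)-1\big)$. Let $P=I\times J$ and $F\colon P\to P$, $F(x,t)=(f_t(x),t)$. For a compact metric space $X$ and continuous surjection $g\colon X\to X$, the inverse limit is $\varprojlim(X,g)=\{\mathbf x=\langle x_0,x_1,\dots\rangle\in X^{\mathbb N}: g(x_{n+1})=x_n\ \forall n\}$ with the product topology (metric $d(\mathbf x,\mathbf y)=\sum_n d(x_n,y_n)/2^n$), and $\pi_n(\mathbf x)=x_n$. Let $\widehat P=\varprojlim(P,F)$ with projections $\pi_n\colon\widehat P\to P$. For $X\subset P$ write $X^{(t)}=X\cap(I\times\{t\})$. A tilted rectangle is a subset of $\mathbb R^2$ obtained by rotating an open (possibly empty) rectangle $(a_1,a_2)\times(b_1,b_2)$ by $\pi/4$; $\mathcal R$ is the set of tilted rectangles contained in $P$. A subset $B\subset P$ is simple if it is open in $P$ and $(\partial B)^{(t)}$ is finite for each $t\in J$. *)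

theory Defs
  imports "HOL-Analysis.Analysis"
begin

definition II :: "real set" where "II = {-1..1}"
definition JJ :: "real set" where "JJ = {1<..2}"

definition tent :: "real \<Rightarrow> real \<Rightarrow> real" where
  "tent t x = min (t * (x - 1) + 3) (t * (1 - x) - 1)"

definition PP :: "(real \<times> real) set" where "PP = II \<times> JJ"

definition FF :: "real \<times> real \<Rightarrow> real \<times> real" where
  "FF p = (tent (snd p) (fst p), snd p)"

definition invlim :: "'a set \<Rightarrow> ('a \<Rightarrow> 'a) \<Rightarrow> (nat \<Rightarrow> 'a) set" where
  "invlim X g = {xs. (\<forall>n. xs n \<in> X) \<and> (\<forall>n. g (xs (Suc n)) = xs n)}"

definition Phat :: "(nat \<Rightarrow> real \<times> real) set" where "Phat = invlim PP FF"

definition proj_pre :: "nat \<Rightarrow> (real \<times> real) set \<Rightarrow> (nat \<Rightarrow> real \<times> real) set" where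
  "proj_pre n X = {xs \<in> Phat. xs n \<in> X}"

definition slice :: "(real \<times> real) set \<Rightarrow> real \<Rightarrow> (real \<times> real) set" where
  "slice X t = X \<inter> (II \<times> {t})"

definition rot4 :: "real \<times> real \<Rightarrow> real \<times> real" where
  "rot4 p = ((fst p - snd p) / sqrt 2, (fst p + snd p) / sqrt 2)"

definition tilted_rect :: "(real \<times> real) set \<Rightarrow> bool" where
  "tilted_rect S \<longleftrightarrow> (\<exists>a1 a2 b1 b2. S = rot4 ` ({a1<..<a2} \<times> {b1<..<b2}))"

definition RR :: "(real \<times> real) set set" where
  "RR = {S. tilted_rect S \<and> S \<subseteq> PP}"

definition simple_set :: "(real \<times> real) set \<Rightarrow> bool" where
  "simple_set B \<longleftrightarrow> openin (top_of_set PP) B \<and>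
     (\<forall>t\<in>JJ. finite (slice ((top_of_set PP) frontier_of B) t))"

end

theory Submission
  imports Defs
begin

lemma FF_pow: "(FF ^^ m) (x, t) = ((tent t ^^ m) x, t)"
  by (induction m) (auto simp: FF_def)

lemma cont_FF: "continuous_on UNIV FF"
  unfolding FF_def tent_def by (intro continuous_intros)

lemma cont_FF_pow: "continuous_on UNIV (FF ^^ m)"
proof (induction m)
  case 0 then show ?case by (simp add: continuous_on_id)
next
  case (Suc m)
  have "continuous_on UNIV (FF \<circ> (FF ^^ m))"
    by (rule continuous_on_compose[OF Suc]) (rule continuous_on_subset[OF cont_FF], simp)
  then show ?case by simp
qed

definition uu :: "real \<times> real \<Rightarrow> real" where "uu q = (fst q + snd q) / sqrt 2"
definition vv :: "real \<times> real \<Rightarrow> real" where "vv q = (snd q - fst q) / sqrt 2"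

lemma rot4_image: "rot4 ` ({a1<..<a2} \<times> {b1<..<b2}) = {q. a1 < uu q \<and> uu q < a2 \<and> b1 < vv q \<and> vv q < b2}"
proof -
  have s: "sqrt 2 * sqrt 2 = (2::real)" by simp
  have s0: "sqrt 2 \<noteq> (0::real)" by simp
  have A: "uu (rot4 p) = fst p" "vv (rot4 p) = snd p" for p
    unfolding uu_def vv_def rot4_def using s s0 by (auto simp: field_simps)
  have B: "rot4 (uu q, vv q) = q" for q
    unfolding uu_def vv_def rot4_def using s s0 by (cases q) (auto simp: field_simps)
  show ?thesis
  proof (intro set_eqI iffI)
    fix q assume "q \<in> rot4 ` ({a1<..<a2} \<times> {b1<..<b2})"
    then obtain p where "p \<in> {a1<..<a2} \<times> {b1<..<b2}" "q = rot4 p" by auto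
    then show "q \<in> {q. a1 < uu q \<and> uu q < a2 \<and> b1 < vv q \<and> vv q < b2}"
      using A by (cases p) auto
  next
    fix q assume "q \<in> {q. a1 < uu q \<and> uu q < a2 \<and> b1 < vv q \<and> vv q < b2}"
    then show "q \<in> rot4 ` ({a1<..<a2} \<times> {b1<..<b2})"
      using B by (intro image_eqI[of _ _ "(uu q, vv q)"]) auto
  qed
qed

lemma cont_uu: "continuous_on UNIV uu" unfolding uu_def by (intro continuous_intros) auto
lemma cont_vv: "continuous_on UNIV vv" unfolding vv_def by (intro continuous_intros) auto

lemma tilted_open_frontier:
  assumes "tilted_rect S"
  shows "open S \<and> (\<forall>t. finite {x. (x, t) \<in> frontier S})"
proof -
  obtain a1 a2 b1 b2 where S: "S = {q. a1 < uu q \<and> uu q < a2 \<and> b1 < vv q \<and> vv q < b2}"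
    using assms rot4_image unfolding tilted_rect_def by metis
  have ou: "open {q. a < uu q}" "open {q. uu q < a}" "open {q. a < vv q}" "open {q. vv q < a}" for a
    using cont_uu cont_vv
    by (auto intro!: open_Collect_less continuous_on_const simp: continuous_on_eq_continuous_within)
  have op: "open S" unfolding S
    using open_Int[OF open_Int[OF ou(1)[of a1] ou(2)[of a2]] open_Int[OF ou(3)[of b1] ou(4)[of b2]]]
    by (simp add: Collect_conj_eq Int_assoc)
  have cl: "closed {q. a1 \<le> uu q \<and> uu q \<le> a2 \<and> b1 \<le> vv q \<and> vv q \<le> b2}"
    using cont_uu cont_vv
    by (auto intro!: closed_Collect_conj closed_Collect_le continuous_on_const simp: continuous_on_eq_continuous_within)
  have "closure S \<subseteq> {q. a1 \<le> uu q \<and> uu q \<le> a2 \<and> b1 \<le> vv q \<and> vv q \<le> b2}"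
    by (rule closure_minimal[OF _ cl]) (auto simp: S)
  then have fr: "frontier S \<subseteq> {q. uu q = a1 \<or> uu q = a2 \<or> vv q = b1 \<or> vv q = b2}"
    using op unfolding frontier_def interior_open[OF op] by (auto simp: S)
  have s0: "sqrt 2 \<noteq> (0::real)" by simp
  have "{x. (x, t) \<in> frontier S} \<subseteq> {a1 * sqrt 2 - t, a2 * sqrt 2 - t, t - b1 * sqrt 2, t - b2 * sqrt 2}" for t
  proof
    fix x assume "x \<in> {x. (x, t) \<in> frontier S}"
    then have "uu (x,t) = a1 \<or> uu (x,t) = a2 \<or> vv (x,t) = b1 \<or> vv (x,t) = b2" using fr by auto
    then show "x \<in> {a1 * sqrt 2 - t, a2 * sqrt 2 - t, t - b1 * sqrt 2, t - b2 * sqrt 2}"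
      using s0 unfolding uu_def vv_def by (auto simp: field_simps)
  qed
  then show ?thesis using op finite_subset by blast
qed

lemma tent_pre_finite:
  assumes "t \<noteq> 0" "finite C"
  shows "finite (tent t -` C)"
proof -
  have "tent t -` C \<subseteq> (\<Union>c\<in>C. {1 + (c - 3) / t, 1 - (c + 1) / t})"
  proof
    fix x assume "x \<in> tent t -` C"
    then have "tent t x \<in> C" by simp
    moreover have "x = 1 + (tent t x - 3) / t \<or> x = 1 - (tent t x + 1) / t"
      using assms(1) unfolding tent_def min_def by (auto simp: field_simps)
    ultimately show "x \<in> (\<Union>c\<in>C. {1 + (c - 3) / t, 1 - (c + 1) / t})" by blast
  qed
  then show ?thesis using assms(2) finite_subset by blast
qed

lemma tent_pow_pre_finite:
  assumes "t \<noteq> 0" "finite C"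
  shows "finite ((tent t ^^ m) -` C)"
  using assms(2)
proof (induction m arbitrary: C)
  case 0 then show ?case by simp
next
  case (Suc m)
  have eq: "(tent t ^^ Suc m) -` C = tent t -` ((tent t ^^ m) -` C)"
    by (auto simp del: funpow.simps simp: funpow_Suc_right)
  show ?case unfolding eq by (rule tent_pre_finite[OF assms(1) Suc.IH[OF Suc.prems]])
qed

lemma Phat_pow:
  assumes "xs \<in> Phat" "d \<le> N"
  shows "xs (N - d) = (FF ^^ d) (xs N)"
  using assms(2)
proof (induction d)
  case 0 then show ?case by simp
next
  case (Suc d)
  have e: "N - d = Suc (N - Suc d)" using Suc.prems by simp
  have "xs (N - Suc d) = FF (xs (N - d))"
    using assms unfolding Phat_def invlim_def e by auto
  then show ?case using Suc by simp
qed

theorem mainTheorem2: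
  fixes k :: nat and R :: "nat \<Rightarrow> (real \<times> real) set" and n :: "nat \<Rightarrow> nat"
  assumes "k \<ge> 1"
    and "\<forall>i<k. R i \<in> RR"
    and "n (k - 1) = Max (n ` {..<k})"
  shows "\<exists>B. B \<subseteq> PP \<and> simple_set B \<and>
           (\<Inter>i\<in>{..<k}. proj_pre (n i) (R i)) = proj_pre (n (k - 1)) B"
proof -
  define N where "N = n (k - 1)"
  define g where "g i = FF ^^ (N - n i)" for i
  define U where "U = (\<Inter>i\<in>{..<k}. g i -` R i)"
  define B where "B = PP \<inter> U"
  have le: "n i \<le> N" if "i < k" for i
    using assms(3) that unfolding N_def by (simp add: Max_ge)
  have Ri: "tilted_rect (R i)" "R i \<subseteq> PP" if "i < k" for i
    using assms(2) that unfolding RR_def by auto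
  have gc: "continuous_on UNIV (g i)" for i unfolding g_def by (rule cont_FF_pow)
  have gopen: "open (g i -` R i)" if "i < k" for i
    using tilted_open_frontier[OF Ri(1)[OF that]] gc
    by (intro continuous_open_vimage) (auto simp: continuous_on_eq_continuous_within)
  have Uo: "open U" unfolding U_def using gopen by (intro open_INT) auto
  have Bo: "openin (top_of_set PP) B" unfolding B_def using Uo
    by (simp add: openin_open_Int)
  have eq: "(\<Inter>i\<in>{..<k}. proj_pre (n i) (R i)) = proj_pre N B"
  proof (intro set_eqI iffI)
    fix xs assume xs: "xs \<in> (\<Inter>i\<in>{..<k}. proj_pre (n i) (R i))"
    have "0 \<in> {..<k}" using assms(1) by auto
    then have P: "xs \<in> Phat" using xs unfolding proj_pre_def by blast
    have "xs N \<in> PP" using P unfolding Phat_def invlim_def by auto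
    moreover have "g i (xs N) \<in> R i" if "i < k" for i
    proof -
      have "xs (n i) \<in> R i" using xs that unfolding proj_pre_def by auto
      then show ?thesis using Phat_pow[OF P, of "N - n i" N] le[OF that] unfolding g_def by simp
    qed
    ultimately show "xs \<in> proj_pre N B" using P unfolding proj_pre_def B_def U_def by auto
  next
    fix xs assume xs: "xs \<in> proj_pre N B"
    then have P: "xs \<in> Phat" unfolding proj_pre_def by auto
    show "xs \<in> (\<Inter>i\<in>{..<k}. proj_pre (n i) (R i))"
    proof
      fix i assume i: "i \<in> {..<k}"
      have "g i (xs N) \<in> R i" using xs i unfolding proj_pre_def B_def U_def by auto
      then have "xs (n i) \<in> R i" using Phat_pow[OF P, of "N - n i" N] le i unfolding g_def by simp
      then show "xs \<in> proj_pre (n i) (R i)" using P unfolding proj_pre_def by auto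
    qed
  qed
  have fr: "(top_of_set PP) frontier_of B \<subseteq> (\<Union>i\<in>{..<k}. g i -` frontier (R i))"
  proof
    fix p assume p: "p \<in> (top_of_set PP) frontier_of B"
    have "(top_of_set PP) frontier_of B = PP \<inter> closure B - B"
      unfolding frontier_of_def interior_of_openin[OF Bo] closure_of_subtopology
      using B_def by auto
    with p have pP: "p \<in> PP" and pc: "p \<in> closure B" and pB: "p \<notin> B" by auto
    then obtain i where i: "i < k" and ni: "g i p \<notin> R i" unfolding B_def U_def by auto
    have "closed (g i -` closure (R i))"
      using gc by (intro continuous_closed_vimage) (auto simp: continuous_on_eq_continuous_within)
    moreover have "B \<subseteq> g i -` closure (R i)" unfolding B_def U_def using i closure_subset by auto
    ultimately have "closure B \<subseteq> g i -` closure (R i)" by (rule closure_minimal[rotated])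
    with pc have "g i p \<in> closure (R i)" by auto
    then have "g i p \<in> frontier (R i)"
      using ni tilted_open_frontier[OF Ri(1)[OF i]] unfolding frontier_def
      by (simp add: interior_open)
    then show "p \<in> (\<Union>i\<in>{..<k}. g i -` frontier (R i))" using i by auto
  qed
  have "finite (slice ((top_of_set PP) frontier_of B) t)" if t: "t \<in> JJ" for t
  proof -
    have t0: "t \<noteq> 0" using t unfolding JJ_def by auto
    define S where "S = (\<Union>i\<in>{..<k}. (tent t ^^ (N - n i)) -` {x. (x, t) \<in> frontier (R i)})"
    have fS: "finite S" unfolding S_def
    proof (intro finite_UN_I)
      fix i assume "i \<in> {..<k}"
      then show "finite ((tent t ^^ (N - n i)) -` {x. (x, t) \<in> frontier (R i)})"
        using tilted_open_frontier[OF Ri(1)] tent_pow_pre_finite[OF t0] by blast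
    qed simp
    have "slice ((top_of_set PP) frontier_of B) t \<subseteq> (\<lambda>x. (x, t)) ` S"
    proof
      fix q assume q: "q \<in> slice ((top_of_set PP) frontier_of B) t"
      then obtain x where qx: "q = (x, t)" unfolding slice_def by auto
      then obtain i where "i < k" "g i (x, t) \<in> frontier (R i)" using q fr unfolding slice_def by auto
      then have "x \<in> S" unfolding S_def g_def FF_pow by auto
      then show "q \<in> (\<lambda>x. (x, t)) ` S" using qx by auto
    qed
    then show ?thesis using fS finite_subset by blast
  qed
  then have "simple_set B" unfolding simple_set_def using Bo by auto
  then show ?thesis using eq B_def unfolding N_def by auto
qed

end
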